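(* Let $X=(X_e)_{e}$ be distributed according to the exponential random graph model with parameter $\boldsymbol\beta=(\beta_1,\dots,\beta_s,G_1,\dots,G_s)$ on $n$ vertices, and assume $\frac12\Phi'_{|\boldsymbol\beta|}(1)<1$. Let $T_3(X)=\sum_{\{e,f,g\}\in\mathcal{T}_3}X_eX_fX_g$. There is a constant $C(\boldsymbol\beta)$ depending only on $\boldsymbol\beta$ such that for all $t\ge0$, \[ \mathbb{P}(|T_3-\mathbb{E}T_3|\ge t)\le2\exp\Big(-\frac1{C(\boldsymbol\beta)}\min\Big(\frac{t^2}{\max(C_{S_2}n^4,C_En^3,n^3)},\ \frac{t}{\max(\sqrt{2n},2C_En)},\ \frac{t^{2/3}}2\Big)\Big). \]
   Context: Graphs on vertex set $[n]$ are identified with $x=(x_e)\in\{0,1\}^{\binom{[n]}2}$. Given $s\in\mathbb{N}$, reals $\beta_1,\dots,\beta_s$ and simple graphs $G_i=(V_i,E_i)$ with $G_1$ a single edge, the ERGM is the probability measure on $\{0,1\}^{\binom{[n]}2}$ proportional to $\exp(\sum_{i=1}^s\beta_in^{-|V_i|+2}N_{G_i}(x))$, where $N_{G_i}(x)$ is the number of copies of $G_i$ in $x$. $\Phi_{\boldsymbol\beta}(x)=\sum_{i=1}^s\beta_i|E_i|x^{|E_i|-1}$ and $|\boldsymbol\beta|=(|\beta_1|,\dots,|\beta_s|)$ (same graphs). $\mathcal{T}_3$ is the set of triples of edges forming a triangle. $C_E=\mathbb{E}X_e$ and $C_{S_2}=\mathbb{E}X_eX_f$ for distinct edges $e,f$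 sharing a vertex (these do not depend on the choice of $e,f$). *)

theory Defs
  imports "HOL-Analysis.Analysis"
begin

definition Edges :: "nat \<Rightarrow> nat set set" where
  "Edges n = {{a, b} | a b. a < n \<and> b < n \<and> a \<noteq> b}"

text \<open>A graph x on [n] (an element of {0,1}^(n choose 2)) is represented by its set of
  present edges, a subset of Edges n.  X_e(x) is the indicator of e in x.\<close>
definition Xe :: "nat set \<Rightarrow> nat set set \<Rightarrow> real" where
  "Xe e x = (if e \<in> x then 1 else 0)"

definition simple_graph :: "nat \<Rightarrow> nat set set \<Rightarrow> bool" where
  "simple_graph k E \<longleftrightarrow> E \<subseteq> Edges k"

text \<open>Number of (labelled) copies of G = ({0..<k}, E) in x: edge-preserving injections
  of {0..<k} into [n].\<close>
definition NG :: "nat \<Rightarrow> nat \<times> nat set set \<Rightarrow> nat set set \<Rightarrow> nat" where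
  "NG n G x = card {f \<in> {0..<fst G} \<rightarrow>\<^sub>E {0..<n}.
      inj_on f {0..<fst G} \<and> (\<forall>e \<in> snd G. f ` e \<in> x)}"

definition ergm_H :: "nat \<Rightarrow> (nat \<Rightarrow> real) \<Rightarrow> (nat \<Rightarrow> nat \<times> nat set set) \<Rightarrow> nat
    \<Rightarrow> nat set set \<Rightarrow> real" where
  "ergm_H s beta G n x =
     (\<Sum>i<s. beta i * real n powr (2 - real (fst (G i))) * real (NG n (G i) x))"

definition ergm_E :: "nat \<Rightarrow> (nat \<Rightarrow> real) \<Rightarrow> (nat \<Rightarrow> nat \<times> nat set set) \<Rightarrow> nat
    \<Rightarrow> (nat set set \<Rightarrow> real) \<Rightarrow> real" where
  "ergm_E s beta G n f =
     (\<Sum>x\<in>Pow (Edges n). exp (ergm_H s beta G n x) * f x)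
       / (\<Sum>x\<in>Pow (Edges n). exp (ergm_H s beta G n x))"

definition ergm_P :: "nat \<Rightarrow> (nat \<Rightarrow> real) \<Rightarrow> (nat \<Rightarrow> nat \<times> nat set set) \<Rightarrow> nat
    \<Rightarrow> (nat set set \<Rightarrow> bool) \<Rightarrow> real" where
  "ergm_P s beta G n P = ergm_E s beta G n (\<lambda>x. if P x then 1 else 0)"

definition Phi :: "nat \<Rightarrow> (nat \<Rightarrow> real) \<Rightarrow> (nat \<Rightarrow> nat \<times> nat set set) \<Rightarrow> real \<Rightarrow> real" where
  "Phi s beta G y = (\<Sum>i<s. beta i * real (card (snd (G i))) * y ^ (card (snd (G i)) - 1))"

definition T3set :: "nat \<Rightarrow> nat set set set" where
  "T3set n = {{{a, b}, {b, c}, {a, c}} | a b c. a < n \<and> b < n \<and> c < n \<and>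
                a \<noteq> b \<and> b \<noteq> c \<and> a \<noteq> c}"

definition T3 :: "nat \<Rightarrow> nat set set \<Rightarrow> real" where
  "T3 n x = (\<Sum>t\<in>T3set n. \<Prod>e\<in>t. Xe e x)"

text \<open>C_E = E X_e and C_{S_2} = E X_e X_f for the edges e = {0,1}, f = {0,2}
  (independent of the choice by symmetry).\<close>
definition C_E :: "nat \<Rightarrow> (nat \<Rightarrow> real) \<Rightarrow> (nat \<Rightarrow> nat \<times> nat set set) \<Rightarrow> nat \<Rightarrow> real" where
  "C_E s beta G n = ergm_E s beta G n (Xe {0, 1})"

definition C_S2 :: "nat \<Rightarrow> (nat \<Rightarrow> real) \<Rightarrow> (nat \<Rightarrow> nat \<times> nat set set) \<Rightarrow> nat \<Rightarrow> real" where
  "C_S2 s beta G n = ergm_E s beta G n (\<lambda>x. Xe {0, 1} x * Xe {0, 2} x)"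

end

theory Submission
  imports Defs
begin


definition pj :: "('a set \<Rightarrow> real) \<Rightarrow> 'a \<Rightarrow> 'a set \<Rightarrow> real" where
  "pj w j x = w (insert j x) / (w (insert j x) + w (x - {j}))"

definition Pop :: "'a set \<Rightarrow> ('a set \<Rightarrow> real) \<Rightarrow> ('a set \<Rightarrow> real) \<Rightarrow> 'a set \<Rightarrow> real" where
  "Pop S w h x = (\<Sum>j\<in>S. pj w j x * h (insert j x) + (1 - pj w j x) * h (x - {j})) / real (card S)"

definition BD :: "'a set \<Rightarrow> ('a set \<Rightarrow> real) \<Rightarrow> real \<Rightarrow> bool" where
  "BD S h c \<longleftrightarrow> (\<forall>e\<in>S. \<forall>x. \<bar>h (insert e x) - h (x - {e})\<bar> \<le> c)"

locale dob =
  fixes S :: "'a set" and w :: "'a set \<Rightarrow> real" and \<alpha> :: real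
  assumes fin: "finite S" and ne: "S \<noteq> {}" and wpos: "\<And>x. w x > 0"
    and a0: "0 \<le> \<alpha>" and a1: "\<alpha> < 1"
    and dobr: "\<And>e x. e \<in> S \<Longrightarrow> (\<Sum>j\<in>S-{e}. \<bar>pj w j (insert e x) - pj w j (x - {e})\<bar>) \<le> \<alpha>"
begin

definition \<rho> where "\<rho> = 1 - (1 - \<alpha>) / real (card S)"

lemma Npos: "real (card S) > 0" using fin ne by (simp add: card_gt_0_iff)

lemma rho_bounds: "0 \<le> \<rho>" "\<rho> < 1"
proof -
  have "card S \<ge> 1" using Npos by linarith
  hence "(1 - \<alpha>) / real (card S) \<le> 1" using a0 a1 by (simp add: divide_simps)
  thus "0 \<le> \<rho>" unfolding \<rho>_def by simp
  show "\<rho> < 1" unfolding \<rho>_def using a1 Npos by simp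
qed

lemma pj_bounds: "0 \<le> pj w j x" "pj w j x \<le> 1"
  using wpos[of "insert j x"] wpos[of "x - {j}"] by (auto simp: pj_def divide_simps)

lemma contract:
  assumes h: "BD S h c" and c: "c \<ge> 0"
  shows "BD S (Pop S w h) (\<rho> * c)"
  unfolding BD_def
proof (intro ballI allI)
  fix e x assume e: "e \<in> S"
  define T where "T y j = pj w j y * h (insert j y) + (1 - pj w j y) * h (y - {j})" for y j
  have eqE: "T (insert e x) e = T (x - {e}) e"
    unfolding T_def pj_def by simp
  have tj: "\<bar>T (insert e x) j - T (x - {e}) j\<bar> \<le> c + \<bar>pj w j (insert e x) - pj w j (x - {e})\<bar> * c"
    if j: "j \<in> S" "j \<noteq> e" for j
  proof -
    define p1 where "p1 = pj w j (insert e x)"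
    define p0 where "p0 = pj w j (x - {e})"
    define a1 where "a1 = h (insert j (insert e x))"
    define a0 where "a0 = h (insert j (x - {e}))"
    define b1 where "b1 = h (insert e x - {j})"
    define b0 where "b0 = h (x - {e} - {j})"
    have ha: "\<bar>a1 - a0\<bar> \<le> c"
    proof -
      have "insert j (insert e x) = insert e (insert j x)" by auto
      moreover have "insert j (x - {e}) = insert j x - {e}" using j by auto
      ultimately show ?thesis using h e unfolding BD_def a1_def a0_def by metis
    qed
    have hb: "\<bar>b1 - b0\<bar> \<le> c"
    proof -
      have "insert e x - {j} = insert e (x - {j})" using j by auto
      moreover have "x - {e} - {j} = x - {j} - {e}" by auto
      ultimately show ?thesis using h e unfolding BD_def b1_def b0_def by metis
    qed
    have hab: "\<bar>a0 - b0\<bar> \<le> c" using h j unfolding BD_def a0_def b0_def by blast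
    have p1b: "0 \<le> p1" "p1 \<le> 1" unfolding p1_def using pj_bounds by auto
    have "T (insert e x) j - T (x - {e}) j = p1 * (a1 - a0) + (1 - p1) * (b1 - b0) + (p1 - p0) * (a0 - b0)"
      unfolding T_def p1_def p0_def a1_def a0_def b1_def b0_def by (simp add: algebra_simps)
    moreover have "\<bar>p1 * (a1 - a0)\<bar> \<le> p1 * c"
      using ha p1b by (simp add: abs_mult mult_left_mono)
    moreover have "\<bar>(1 - p1) * (b1 - b0)\<bar> \<le> (1 - p1) * c"
      using hb p1b by (simp add: abs_mult mult_left_mono)
    moreover have "\<bar>(p1 - p0) * (a0 - b0)\<bar> \<le> \<bar>p1 - p0\<bar> * c"
      using hab by (simp add: abs_mult mult_left_mono)
    ultimately have "\<bar>T (insert e x) j - T (x - {e}) j\<bar> \<le> p1 * c + (1 - p1) * c + \<bar>p1 - p0\<bar> * c"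
      unfolding abs_le_iff by linarith
    thus ?thesis unfolding p1_def p0_def by (simp add: algebra_simps)
  qed
  have "Pop S w h (insert e x) - Pop S w h (x - {e}) = (\<Sum>j\<in>S. T (insert e x) j - T (x - {e}) j) / real (card S)"
    unfolding Pop_def T_def by (simp add: sum_subtractf diff_divide_distrib)
  also have "(\<Sum>j\<in>S. T (insert e x) j - T (x - {e}) j) = (\<Sum>j\<in>S-{e}. T (insert e x) j - T (x - {e}) j)"
    using sum.remove[OF fin e, of "\<lambda>j. T (insert e x) j - T (x - {e}) j"] eqE by simp
  finally have eq: "Pop S w h (insert e x) - Pop S w h (x - {e}) = (\<Sum>j\<in>S-{e}. T (insert e x) j - T (x - {e}) j) / real (card S)" .
  have "\<bar>\<Sum>j\<in>S-{e}. T (insert e x) j - T (x - {e}) j\<bar> \<le> (\<Sum>j\<in>S-{e}. c + \<bar>pj w j (insert e x) - pj w j (x - {e})\<bar> * c)"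
    by (rule order_trans[OF sum_abs]) (rule sum_mono, rule tj, auto)
  also have "\<dots> = real (card S - 1) * c + (\<Sum>j\<in>S-{e}. \<bar>pj w j (insert e x) - pj w j (x - {e})\<bar>) * c"
    using fin e by (simp add: sum.distrib sum_distrib_right)
  also have "\<dots> \<le> real (card S - 1) * c + \<alpha> * c"
    using dobr[OF e, of x] c by (simp add: mult_right_mono)
  finally have bnd: "\<bar>\<Sum>j\<in>S-{e}. T (insert e x) j - T (x - {e}) j\<bar> \<le> real (card S - 1) * c + \<alpha> * c" .
  have cs: "real (card S - 1) = real (card S) - 1" using Npos by (simp add: of_nat_diff)
  have "\<bar>Pop S w h (insert e x) - Pop S w h (x - {e})\<bar> \<le> (real (card S - 1) * c + \<alpha> * c) / real (card S)"
    unfolding eq using bnd Npos by (simp add: divide_right_mono)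
  also have "\<dots> = \<rho> * c" unfolding \<rho>_def cs using Npos by (simp add: field_simps)
  finally show "\<bar>Pop S w h (insert e x) - Pop S w h (x - {e})\<bar> \<le> \<rho> * c" .
qed


lemma BD_iter: assumes "BD S h c" "c \<ge> 0" shows "BD S ((Pop S w ^^ k) h) (\<rho>^k * c)"
proof (induction k)
  case 0 thus ?case using assms by simp
next
  case (Suc k)
  have "BD S (Pop S w ((Pop S w ^^ k) h)) (\<rho> * (\<rho>^k * c))"
    by (rule contract[OF Suc]) (use assms rho_bounds in simp)
  thus ?case by (simp add: mult.assoc)
qed

lemma BD_sum: assumes "finite A" "\<And>k. k \<in> A \<Longrightarrow> BD S (H k) (c k)"
  shows "BD S (\<lambda>x. \<Sum>k\<in>A. H k x) (\<Sum>k\<in>A. c k)"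
  unfolding BD_def
proof (intro ballI allI)
  fix e x assume e: "e \<in> S"
  have "\<bar>(\<Sum>k\<in>A. H k (insert e x)) - (\<Sum>k\<in>A. H k (x - {e}))\<bar> = \<bar>\<Sum>k\<in>A. H k (insert e x) - H k (x - {e})\<bar>"
    by (simp add: sum_subtractf)
  also have "\<dots> \<le> (\<Sum>k\<in>A. \<bar>H k (insert e x) - H k (x - {e})\<bar>)" by (rule sum_abs)
  also have "\<dots> \<le> (\<Sum>k\<in>A. c k)" using assms(2) e unfolding BD_def by (intro sum_mono) blast
  finally show "\<bar>(\<Sum>k\<in>A. H k (insert e x)) - (\<Sum>k\<in>A. H k (x - {e}))\<bar> \<le> (\<Sum>k\<in>A. c k)" .
qed

lemma Pop_sum: "Pop S w (\<lambda>x. \<Sum>k\<in>A. H k x) x = (\<Sum>k\<in>A. Pop S w (H k) x)"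
  unfolding Pop_def
  by (simp add: sum_divide_distrib[symmetric] sum_distrib_left sum.distrib[symmetric] sum.swap[of _ S A])

definition L where "L j h x = pj w j x * (h x - h (insert j x)) + (1 - pj w j x) * (h x - h (x - {j}))"
definition q where "q j y = w y * w (y - {j}) / (w y + w (y - {j}))"

lemma h_minus_Pop: "h x - Pop S w h x = (\<Sum>j\<in>S. L j h x) / real (card S)"
proof -
  have "(\<Sum>j\<in>S. L j h x) = (\<Sum>j\<in>S. h x - (pj w j x * h (insert j x) + (1 - pj w j x) * h (x - {j})))"
    unfolding L_def by (intro sum.cong) (auto simp: algebra_simps)
  also have "\<dots> = real (card S) * h x - (\<Sum>j\<in>S. pj w j x * h (insert j x) + (1 - pj w j x) * h (x - {j}))"
    by (simp add: sum_subtractf)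
  finally show ?thesis unfolding Pop_def using Npos by (simp add: field_simps)
qed

lemma split_pow: "(\<Sum>x\<in>Pow S. \<phi> x) = (\<Sum>x\<in>{x\<in>Pow S. j \<in> x}. \<phi> x) + (\<Sum>x\<in>{x\<in>Pow S. j \<notin> x}. \<phi> x)"
proof -
  have u: "{x\<in>Pow S. j \<in> x} \<union> {x\<in>Pow S. j \<notin> x} = Pow S" by auto
  have "(\<Sum>x\<in>{x\<in>Pow S. j \<in> x} \<union> {x\<in>Pow S. j \<notin> x}. \<phi> x) = (\<Sum>x\<in>{x\<in>Pow S. j \<in> x}. \<phi> x) + (\<Sum>x\<in>{x\<in>Pow S. j \<notin> x}. \<phi> x)"
    by (rule sum.union_disjoint) (use fin in auto)
  thus ?thesis unfolding u .
qed

lemma reindex0: assumes "j \<in> S"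
  shows "(\<Sum>x\<in>{x\<in>Pow S. j \<notin> x}. \<phi> x) = (\<Sum>y\<in>{y\<in>Pow S. j \<in> y}. \<phi> (y - {j}))"
  by (rule sum.reindex_bij_witness[where j = "insert j" and i = "\<lambda>y. y - {j}"]) (use assms in auto)

lemma dirichlet: assumes j: "j \<in> S"
  shows "(\<Sum>x\<in>Pow S. w x * L j h x * u x) =
    (\<Sum>y\<in>{y\<in>Pow S. j \<in> y}. q j y * (h y - h (y - {j})) * (u y - u (y - {j})))"
proof -
  have A1: "(\<Sum>x\<in>{x\<in>Pow S. j \<in> x}. w x * L j h x * u x) =
      (\<Sum>y\<in>{y\<in>Pow S. j \<in> y}. q j y * (h y - h (y - {j})) * u y)"
  proof (intro sum.cong refl)
    fix y assume "y \<in> {y\<in>Pow S. j \<in> y}"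
    hence jy: "insert j y = y" by auto
    have qq: "w y * (1 - pj w j y) = q j y" unfolding pj_def q_def jy
      using wpos[of y] wpos[of "y - {j}"] by (simp add: field_simps)
    have "w y * L j h y * u y = (w y * (1 - pj w j y)) * (h y - h (y - {j})) * u y"
      unfolding L_def jy by simp
    thus "w y * L j h y * u y = q j y * (h y - h (y - {j})) * u y" unfolding qq .
  qed
  have A0: "(\<Sum>x\<in>{x\<in>Pow S. j \<notin> x}. w x * L j h x * u x) =
      (\<Sum>y\<in>{y\<in>Pow S. j \<in> y}. - q j y * (h y - h (y - {j})) * u (y - {j}))"
    unfolding reindex0[OF j]
  proof (intro sum.cong refl)
    fix y assume "y \<in> {y\<in>Pow S. j \<in> y}"
    hence jy: "insert j (y - {j}) = y" and jy2: "y - {j} - {j} = y - {j}" by auto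
    have qq: "w (y - {j}) * pj w j (y - {j}) = q j y" unfolding pj_def q_def jy jy2
      using wpos[of y] wpos[of "y - {j}"] by (simp add: field_simps)
    have "w (y - {j}) * L j h (y - {j}) * u (y - {j}) = - (w (y - {j}) * pj w j (y - {j})) * (h y - h (y - {j})) * u (y - {j})"
      unfolding L_def jy jy2 by (simp add: algebra_simps)
    thus "w (y - {j}) * L j h (y - {j}) * u (y - {j}) = - q j y * (h y - h (y - {j})) * u (y - {j})" unfolding qq .
  qed
  show ?thesis unfolding split_pow[of _ j] A1 A0 sum.distrib[symmetric]
    by (intro sum.cong refl) (simp add: algebra_simps)
qed


lemma stationary: "(\<Sum>x\<in>Pow S. w x * (h x - Pop S w h x)) = 0"
proof -
  have "(\<Sum>x\<in>Pow S. w x * (h x - Pop S w h x)) = (\<Sum>x\<in>Pow S. \<Sum>j\<in>S. w x * L j h x * 1) / real (card S)"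
    unfolding h_minus_Pop by (simp add: sum_divide_distrib sum_distrib_left)
  also have "\<dots> = (\<Sum>j\<in>S. \<Sum>x\<in>Pow S. w x * L j h x * 1) / real (card S)"
    by (simp add: sum.swap[of _ "Pow S" S])
  also have "\<dots> = 0"
  proof -
    have "(\<Sum>x\<in>Pow S. w x * L j h x * 1) = 0" if "j \<in> S" for j
      unfolding dirichlet[OF that] by simp
    thus ?thesis by simp
  qed
  finally show ?thesis .
qed

lemma exp_diff_bd: "\<bar>exp a - exp b\<bar> \<le> \<bar>a - b\<bar> * (exp a + exp (b::real))"
proof -
  have key: "\<bar>exp a - exp b\<bar> \<le> \<bar>a - b\<bar> * (exp a + exp b)" if ba: "b \<le> a" for a b :: real
  proof -
    have "1 + (b - a) \<le> exp (b - a)" by (rule exp_ge_add_one_self)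
    hence "exp a * (1 + (b - a)) \<le> exp a * exp (b - a)" by (simp add: mult_left_mono)
    also have "\<dots> = exp b" by (simp add: mult_exp_exp)
    finally have 1: "exp a - exp b \<le> (a - b) * exp a" by (simp add: algebra_simps)
    have 2: "exp b \<le> exp a" using ba by simp
    have 3: "(a - b) * exp a \<le> (a - b) * (exp a + exp b)" using ba by (intro mult_left_mono) auto
    show ?thesis using 1 2 3 ba by simp
  qed
  show ?thesis
  proof (cases "b \<le> a")
    case True thus ?thesis by (rule key)
  next
    case False
    hence "\<bar>exp b - exp a\<bar> \<le> \<bar>b - a\<bar> * (exp b + exp a)" by (intro key) simp
    thus ?thesis by (simp add: abs_minus_commute add.commute)
  qed
qed

lemma q_le: "q j y \<le> w y" "q j y \<le> w (y - {j})" "0 \<le> q j y"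
  using wpos[of y] wpos[of "y - {j}"] unfolding q_def by (auto simp: field_simps)

lemma energy:
  assumes th: "\<theta> \<ge> 0" and g: "BD S g Gb" and f: "BD S f F" and G0: "Gb \<ge> 0" and F0: "F \<ge> 0"
  shows "\<bar>\<Sum>x\<in>Pow S. w x * (g x - Pop S w g x) * exp (\<theta> * f x)\<bar>
     \<le> Gb * \<theta> * F * (\<Sum>x\<in>Pow S. w x * exp (\<theta> * f x))"
proof -
  define u where "u x = exp (\<theta> * f x)" for x
  define M where "M = (\<Sum>x\<in>Pow S. w x * u x)"
  have sitebound: "\<bar>\<Sum>x\<in>Pow S. w x * L j g x * u x\<bar> \<le> Gb * \<theta> * F * M" if j: "j \<in> S" for j
  proof -
    have "\<bar>\<Sum>x\<in>Pow S. w x * L j g x * u x\<bar> =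
      \<bar>\<Sum>y\<in>{y\<in>Pow S. j \<in> y}. q j y * (g y - g (y - {j})) * (u y - u (y - {j}))\<bar>"
      unfolding dirichlet[OF j] ..
    also have "\<dots> \<le> (\<Sum>y\<in>{y\<in>Pow S. j \<in> y}. Gb * \<theta> * F * (w y * u y + w (y - {j}) * u (y - {j})))"
    proof (rule order_trans[OF sum_abs], rule sum_mono)
      fix y assume "y \<in> {y\<in>Pow S. j \<in> y}"
      hence jy: "insert j y = y" by auto
      have dg: "\<bar>g y - g (y - {j})\<bar> \<le> Gb" using g j unfolding BD_def by (metis jy)
      have df: "\<bar>f y - f (y - {j})\<bar> \<le> F" using f j unfolding BD_def by (metis jy)
      have du: "\<bar>u y - u (y - {j})\<bar> \<le> \<theta> * F * (u y + u (y - {j}))"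
      proof -
        have "\<bar>u y - u (y - {j})\<bar> \<le> \<bar>\<theta> * f y - \<theta> * f (y - {j})\<bar> * (u y + u (y - {j}))"
          unfolding u_def by (rule exp_diff_bd)
        also have "\<bar>\<theta> * f y - \<theta> * f (y - {j})\<bar> = \<theta> * \<bar>f y - f (y - {j})\<bar>"
          using th by (simp add: abs_mult right_diff_distrib[symmetric])
        also have "\<dots> \<le> \<theta> * F" using df th by (simp add: mult_left_mono)
        finally show ?thesis by (simp add: mult_right_mono u_def add_nonneg_nonneg)
      qed
      have up: "u y > 0" "u (y - {j}) > 0" unfolding u_def by auto
      have "\<bar>q j y * (g y - g (y - {j})) * (u y - u (y - {j}))\<bar> = q j y * \<bar>g y - g (y - {j})\<bar> * \<bar>u y - u (y - {j})\<bar>"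
        using q_le(3) by (simp add: abs_mult)
      also have "\<dots> \<le> q j y * Gb * (\<theta> * F * (u y + u (y - {j})))"
        using dg du q_le(3)[of j y] by (intro mult_mono mult_left_mono) auto
      also have "\<dots> = Gb * \<theta> * F * (q j y * u y + q j y * u (y - {j}))" by (simp add: algebra_simps)
      also have "\<dots> \<le> Gb * \<theta> * F * (w y * u y + w (y - {j}) * u (y - {j}))"
        using q_le[of j y] up G0 th F0
        by (intro mult_left_mono add_mono mult_right_mono) auto
      finally show "\<bar>q j y * (g y - g (y - {j})) * (u y - u (y - {j}))\<bar> \<le> Gb * \<theta> * F * (w y * u y + w (y - {j}) * u (y - {j}))" .
    qed
    also have "\<dots> = Gb * \<theta> * F * M"
      unfolding M_def split_pow[of _ j] reindex0[OF j] sum_distrib_left[symmetric] sum.distrib by simp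
    finally show ?thesis .
  qed
  have "(\<Sum>x\<in>Pow S. w x * (g x - Pop S w g x) * u x) = (\<Sum>x\<in>Pow S. \<Sum>j\<in>S. w x * L j g x * u x) / real (card S)"
  proof -
    have "\<And>x. w x * (g x - Pop S w g x) * u x = (\<Sum>j\<in>S. w x * L j g x * u x) / real (card S)"
      unfolding h_minus_Pop by (simp add: sum_distrib_left sum_distrib_right)
    thus ?thesis by (simp add: sum_divide_distrib)
  qed
  also have "\<dots> = (\<Sum>j\<in>S. \<Sum>x\<in>Pow S. w x * L j g x * u x) / real (card S)"
    by (simp add: sum.swap[of _ "Pow S" S])
  finally have eq: "(\<Sum>x\<in>Pow S. w x * (g x - Pop S w g x) * u x) = (\<Sum>j\<in>S. \<Sum>x\<in>Pow S. w x * L j g x * u x) / real (card S)" .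
  have "\<bar>\<Sum>j\<in>S. \<Sum>x\<in>Pow S. w x * L j g x * u x\<bar> \<le> (\<Sum>j\<in>S. Gb * \<theta> * F * M)"
    by (rule order_trans[OF sum_abs], rule sum_mono, rule sitebound)
  also have "\<dots> = real (card S) * (Gb * \<theta> * F * M)" by simp
  finally have "\<bar>\<Sum>x\<in>Pow S. w x * (g x - Pop S w g x) * u x\<bar> \<le> Gb * \<theta> * F * M"
    unfolding eq using Npos by (simp add: divide_simps mult.commute)
  thus ?thesis unfolding M_def u_def .
qed


lemma BD_mono: "BD S h c \<Longrightarrow> c \<le> d \<Longrightarrow> BD S h d"
  unfolding BD_def by (meson order_trans)

lemma osc: assumes h: "BD S h c" and c: "c \<ge> 0" and x: "x \<subseteq> S"
  shows "\<bar>h x - h {}\<bar> \<le> real (card x) * c"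
proof -
  have "finite x" using x fin finite_subset by blast
  thus ?thesis using x
  proof (induction x rule: finite_induct)
    case empty thus ?case by simp
  next
    case (insert a x)
    have "a \<in> S" using insert.prems by simp
    hence "\<bar>h (insert a x) - h (insert a x - {a})\<bar> \<le> c" using h unfolding BD_def by simp
    moreover have "insert a x - {a} = x" using insert.hyps by auto
    moreover have "\<bar>h x - h {}\<bar> \<le> real (card x) * c" using insert by auto
    ultimately show ?case using insert.hyps by (simp add: algebra_simps)
  qed
qed

lemma mean0_bound: assumes h: "BD S h c" and c: "c \<ge> 0" and m: "(\<Sum>y\<in>Pow S. w y * h y) = 0"
  and x: "x \<subseteq> S"
  shows "\<bar>h x\<bar> \<le> 2 * real (card S) * c"
proof -
  define Z where "Z = (\<Sum>y\<in>Pow S. w y)"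
  have Zp: "Z > 0" unfolding Z_def using fin wpos by (intro sum_pos) auto
  have dif: "\<bar>h x - h y\<bar> \<le> 2 * real (card S) * c" if "y \<in> Pow S" for y
  proof -
    have "\<bar>h x - h {}\<bar> \<le> real (card x) * c" by (rule osc[OF h c x])
    also have "\<dots> \<le> real (card S) * c" using card_mono[OF fin x] c by (simp add: mult_right_mono)
    finally have 1: "\<bar>h x - h {}\<bar> \<le> real (card S) * c" .
    have "\<bar>h y - h {}\<bar> \<le> real (card y) * c" using that by (intro osc[OF h c]) auto
    also have "\<dots> \<le> real (card S) * c" using card_mono[OF fin, of y] that c by (simp add: mult_right_mono)
    finally show ?thesis using 1 by linarith
  qed
  have "Z * h x = (\<Sum>y\<in>Pow S. w y * (h x - h y))"
    using m unfolding Z_def by (simp add: sum_distrib_left sum_distrib_right right_diff_distrib sum_subtractf mult.commute)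
  also have "\<bar>\<dots>\<bar> \<le> (\<Sum>y\<in>Pow S. w y * (2 * real (card S) * c))"
    by (rule order_trans[OF sum_abs], rule sum_mono) (use dif wpos in \<open>auto simp: abs_mult less_imp_le mult.assoc intro!: mult_left_mono\<close>)
  also have "\<dots> = Z * (2 * real (card S) * c)" unfolding Z_def by (simp add: sum_distrib_right)
  finally show ?thesis using Zp by (simp add: abs_mult)
qed

lemma stationary_iter: "(\<Sum>x\<in>Pow S. w x * (Pop S w ^^ k) h x) = (\<Sum>x\<in>Pow S. w x * h x)"
proof (induction k)
  case 0 thus ?case by simp
next
  case (Suc k)
  have "(\<Sum>x\<in>Pow S. w x * (Pop S w ((Pop S w ^^ k) h)) x) = (\<Sum>x\<in>Pow S. w x * (Pop S w ^^ k) h x)"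
    using stationary[of "(Pop S w ^^ k) h"] by (simp add: right_diff_distrib sum_subtractf)
  thus ?case using Suc by simp
qed

lemma limit_arg: assumes "\<And>K::nat. a \<le> b + c * r ^ K" "0 \<le> r" "r < (1::real)"
  shows "a \<le> b"
proof -
  have "(\<lambda>K. b + c * r ^ K) \<longlonglongrightarrow> b + c * 0"
    by (intro tendsto_intros LIMSEQ_power_zero) (use assms in auto)
  thus ?thesis using assms(1) by (intro LIMSEQ_le_const) auto
qed

lemma mgf_deriv_bound:
  assumes f: "BD S f F" and F0: "F \<ge> 0" and m: "(\<Sum>x\<in>Pow S. w x * f x) = 0" and th: "\<theta> \<ge> 0"
  shows "(\<Sum>x\<in>Pow S. w x * f x * exp (\<theta> * f x))
     \<le> \<theta> * (F * real (card S) / (1 - \<alpha>)) * F * (\<Sum>x\<in>Pow S. w x * exp (\<theta> * f x))"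
proof -
  define Gb where "Gb = F * real (card S) / (1 - \<alpha>)"
  define M where "M = (\<Sum>x\<in>Pow S. w x * exp (\<theta> * f x))"
  have G0: "Gb \<ge> 0" unfolding Gb_def using F0 a1 by simp
  have M0: "M \<ge> 0" unfolding M_def using wpos by (intro sum_nonneg) (simp add: less_imp_le)
  have main: "(\<Sum>x\<in>Pow S. w x * f x * exp (\<theta> * f x)) \<le> Gb * \<theta> * F * M + (2 * real (card S) * F * M) * \<rho> ^ K" for K
  proof -
    define g where "g x = (\<Sum>k<K. (Pop S w ^^ k) f x)" for x
    define hK where "hK = (Pop S w ^^ K) f"
    have Pg: "Pop S w g x = (\<Sum>k<K. (Pop S w ^^ Suc k) f x)" for x
      unfolding g_def[abs_def] by (simp add: Pop_sum)
    have dec: "f x = (g x - Pop S w g x) + hK x" for x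
    proof -
      have "g x - Pop S w g x = (\<Sum>k<K. (Pop S w ^^ k) f x - (Pop S w ^^ Suc k) f x)"
        unfolding Pg g_def by (simp add: sum_subtractf)
      also have "\<dots> = f x - hK x" unfolding hK_def by (subst sum_lessThan_telescope') simp
      finally show ?thesis by simp
    qed
    have BDg: "BD S g Gb"
    proof -
      have "BD S g (\<Sum>k<K. \<rho> ^ k * F)"
        unfolding g_def[abs_def] by (intro BD_sum BD_iter f F0) auto
      moreover have "(\<Sum>k<K. \<rho> ^ k * F) \<le> Gb"
      proof -
        have "(\<Sum>k<K. \<rho> ^ k) = (1 - \<rho> ^ K) / (1 - \<rho>)" using rho_bounds by (simp add: sum_gp_strict)
        also have "\<dots> \<le> 1 / (1 - \<rho>)" using rho_bounds by (intro divide_right_mono) auto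
        also have "1 / (1 - \<rho>) = real (card S) / (1 - \<alpha>)" unfolding \<rho>_def using Npos a1 by simp
        finally have "(\<Sum>k<K. \<rho> ^ k) * F \<le> real (card S) / (1 - \<alpha>) * F" using F0 by (rule mult_right_mono)
        moreover have "(\<Sum>k<K. \<rho> ^ k * F) = (\<Sum>k<K. \<rho> ^ k) * F" by (simp add: sum_distrib_right)
        ultimately show ?thesis unfolding Gb_def by (simp add: mult.commute)
      qed
      ultimately show ?thesis by (rule BD_mono)
    qed
    have BDh: "BD S hK (\<rho> ^ K * F)" unfolding hK_def by (rule BD_iter[OF f F0])
    have mh: "(\<Sum>x\<in>Pow S. w x * hK x) = 0" unfolding hK_def stationary_iter m ..
    have hb: "\<bar>hK x\<bar> \<le> 2 * real (card S) * (\<rho> ^ K * F)" if "x \<in> Pow S" for x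
      using mean0_bound[OF BDh _ mh] that rho_bounds F0 by auto
    have "(\<Sum>x\<in>Pow S. w x * f x * exp (\<theta> * f x)) =
        (\<Sum>x\<in>Pow S. w x * (g x - Pop S w g x) * exp (\<theta> * f x)) + (\<Sum>x\<in>Pow S. w x * hK x * exp (\<theta> * f x))"
      by (subst dec) (simp add: sum.distrib[symmetric] algebra_simps)
    also have "\<dots> \<le> Gb * \<theta> * F * M + (\<Sum>x\<in>Pow S. w x * (2 * real (card S) * (\<rho> ^ K * F)) * exp (\<theta> * f x))"
    proof (rule add_mono)
      show "(\<Sum>x\<in>Pow S. w x * (g x - Pop S w g x) * exp (\<theta> * f x)) \<le> Gb * \<theta> * F * M"
        using energy[OF th BDg f G0 F0] unfolding M_def by linarith
      show "(\<Sum>x\<in>Pow S. w x * hK x * exp (\<theta> * f x)) \<le> (\<Sum>x\<in>Pow S. w x * (2 * real (card S) * (\<rho> ^ K * F)) * exp (\<theta> * f x))"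
      proof (rule sum_mono)
        fix x assume x: "x \<in> Pow S"
        have "hK x \<le> 2 * real (card S) * (\<rho> ^ K * F)" using hb[OF x] by linarith
        thus "w x * hK x * exp (\<theta> * f x) \<le> w x * (2 * real (card S) * (\<rho> ^ K * F)) * exp (\<theta> * f x)"
          using wpos[of x] by (intro mult_right_mono mult_left_mono) auto
      qed
    qed
    also have "(\<Sum>x\<in>Pow S. w x * (2 * real (card S) * (\<rho> ^ K * F)) * exp (\<theta> * f x)) = (2 * real (card S) * F * M) * \<rho> ^ K"
      unfolding M_def by (simp add: sum_distrib_left sum_distrib_right mult_ac)
    finally show ?thesis .
  qed
  have "(\<Sum>x\<in>Pow S. w x * f x * exp (\<theta> * f x)) \<le> Gb * \<theta> * F * M"
    by (rule limit_arg[OF main rho_bounds])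
  thus ?thesis unfolding Gb_def M_def by (simp add: mult_ac)
qed


lemma mgf_bound:
  assumes f: "BD S f F" and F0: "F \<ge> 0" and m: "(\<Sum>x\<in>Pow S. w x * f x) = 0" and th: "\<theta> \<ge> 0"
  shows "(\<Sum>x\<in>Pow S. w x * exp (\<theta> * f x)) \<le> (\<Sum>x\<in>Pow S. w x) * exp (F * (F * real (card S) / (1 - \<alpha>)) * \<theta>\<^sup>2 / 2)"
proof -
  define V where "V = F * (F * real (card S) / (1 - \<alpha>))"
  define M where "M t = (\<Sum>x\<in>Pow S. w x * exp (t * f x))" for t
  define M' where "M' t = (\<Sum>x\<in>Pow S. w x * (exp (t * f x) * f x))" for t
  have Mpos: "M t > 0" for t unfolding M_def using fin wpos by (intro sum_pos) auto
  have dM: "DERIV M t :> M' t" for t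
    unfolding M_def M'_def apply (auto intro!: derivative_eq_intros)
    by (auto intro!: sum.cong simp: mult_ac)
  define \<psi> where "\<psi> t = ln (M t) - V * t\<^sup>2 / 2" for t
  have dpsi: "DERIV \<psi> t :> M' t / M t - V * t" for t
    unfolding \<psi>_def
    by (rule derivative_eq_intros dM Mpos | simp)+
  have "\<psi> \<theta> \<le> \<psi> 0"
  proof (rule DERIV_nonpos_imp_nonincreasing[OF th])
    fix t :: real assume t: "0 \<le> t" "t \<le> \<theta>"
    have "M' t \<le> t * V * M t"
      using mgf_deriv_bound[OF f F0 m t(1)] unfolding M'_def M_def V_def by (simp add: mult_ac)
    hence "M' t / M t - V * t \<le> 0" using Mpos[of t] by (simp add: divide_simps mult_ac)
    thus "\<exists>y. DERIV \<psi> t :> y \<and> y \<le> 0" using dpsi by blast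
  qed
  hence "ln (M \<theta>) \<le> ln (M 0) + V * \<theta>\<^sup>2 / 2" unfolding \<psi>_def by simp
  hence "M \<theta> \<le> exp (ln (M 0) + V * \<theta>\<^sup>2 / 2)" using Mpos[of \<theta>]
    by (metis exp_le_cancel_iff exp_ln)
  also have "\<dots> = M 0 * exp (V * \<theta>\<^sup>2 / 2)" using Mpos[of 0] by (simp add: exp_add)
  finally show ?thesis unfolding M_def V_def by simp
qed

lemma tail1:
  assumes f: "BD S f F" and F0: "F > 0" and m: "(\<Sum>x\<in>Pow S. w x * f x) = 0" and t: "t \<ge> 0"
  shows "(\<Sum>x\<in>Pow S. if f x \<ge> t then w x else 0) \<le> (\<Sum>x\<in>Pow S. w x) * exp (- t\<^sup>2 * (1 - \<alpha>) / (2 * F\<^sup>2 * real (card S)))"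
proof -
  define V where "V = F * (F * real (card S) / (1 - \<alpha>))"
  have Vp: "V > 0" unfolding V_def using F0 Npos a1 by simp
  define \<theta> where "\<theta> = t / V"
  have th: "\<theta> \<ge> 0" unfolding \<theta>_def using t Vp by simp
  have "(\<Sum>x\<in>Pow S. if f x \<ge> t then w x else 0) \<le> (\<Sum>x\<in>Pow S. exp (- \<theta> * t) * (w x * exp (\<theta> * f x)))"
  proof (rule sum_mono)
    fix x
    have e: "exp (- \<theta> * t) * (w x * exp (\<theta> * f x)) = w x * exp (\<theta> * (f x - t))"
      by (simp add: mult_exp_exp algebra_simps)
    have "(if f x \<ge> t then w x else 0) \<le> w x * exp (\<theta> * (f x - t))"
    proof (cases "f x \<ge> t")
      case True
      hence "1 \<le> exp (\<theta> * (f x - t))" using th by simp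
      thus ?thesis using True wpos[of x] by simp
    next
      case False thus ?thesis using wpos[of x] by simp
    qed
    thus "(if f x \<ge> t then w x else 0) \<le> exp (- \<theta> * t) * (w x * exp (\<theta> * f x))"
      unfolding e .
  qed
  also have "\<dots> = exp (- \<theta> * t) * (\<Sum>x\<in>Pow S. w x * exp (\<theta> * f x))" by (simp add: sum_distrib_left)
  also have "\<dots> \<le> exp (- \<theta> * t) * ((\<Sum>x\<in>Pow S. w x) * exp (V * \<theta>\<^sup>2 / 2))"
    using mgf_bound[OF f _ m th] F0 unfolding V_def by (intro mult_left_mono) auto
  also have "\<dots> = (\<Sum>x\<in>Pow S. w x) * exp (- \<theta> * t + V * \<theta>\<^sup>2 / 2)" by (simp add: mult_exp_exp mult_ac)
  also have "- \<theta> * t + V * \<theta>\<^sup>2 / 2 = - t\<^sup>2 * (1 - \<alpha>) / (2 * F\<^sup>2 * real (card S))"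
    unfolding \<theta>_def V_def using F0 Npos a1 by (simp add: field_simps power2_eq_square)
  finally show ?thesis .
qed

lemma conc:
  assumes f: "BD S f F" and F0: "F > 0" and t: "t \<ge> 0"
  defines "Z \<equiv> (\<Sum>x\<in>Pow S. w x)"
  defines "E \<equiv> (\<Sum>x\<in>Pow S. w x * f x) / Z"
  shows "(\<Sum>x\<in>Pow S. if \<bar>f x - E\<bar> \<ge> t then w x else 0) / Z \<le> 2 * exp (- t\<^sup>2 * (1 - \<alpha>) / (2 * F\<^sup>2 * real (card S)))"
proof -
  have Zp: "Z > 0" unfolding Z_def using fin wpos by (intro sum_pos) auto
  define g where "g x = f x - E" for x
  have m: "(\<Sum>x\<in>Pow S. w x * g x) = 0"
  proof -
    have "(\<Sum>x\<in>Pow S. w x * g x) = (\<Sum>x\<in>Pow S. w x * f x) - Z * E"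
      unfolding g_def Z_def by (simp add: right_diff_distrib sum_subtractf sum_distrib_right)
    also have "Z * E = (\<Sum>x\<in>Pow S. w x * f x)" unfolding E_def using Zp by simp
    finally show ?thesis by simp
  qed
  have m': "(\<Sum>x\<in>Pow S. w x * (- g x)) = 0" using m by (simp add: sum_negf)
  have bg: "BD S g F" using f unfolding BD_def g_def by simp
  have bg': "BD S (\<lambda>x. - g x) F" using f unfolding BD_def g_def by (simp add: abs_minus_commute)
  define B where "B = exp (- t\<^sup>2 * (1 - \<alpha>) / (2 * F\<^sup>2 * real (card S)))"
  have "(\<Sum>x\<in>Pow S. if \<bar>f x - E\<bar> \<ge> t then w x else 0) \<le>
     (\<Sum>x\<in>Pow S. (if g x \<ge> t then w x else 0) + (if - g x \<ge> t then w x else 0))"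
    by (rule sum_mono) (use wpos in \<open>auto simp: g_def less_imp_le\<close>)
  also have "\<dots> \<le> Z * B + Z * B" unfolding sum.distrib Z_def B_def
    by (intro add_mono tail1[OF bg F0 m t] tail1[OF bg' F0 m' t])
  finally show ?thesis using Zp unfolding B_def by (simp add: divide_simps mult_ac)
qed

end



lemma card_fix2:
  assumes "u < k" "v < k" "u \<noteq> v"
  shows "card {\<phi> \<in> {0..<k} \<rightarrow>\<^sub>E {0..<n}. \<phi> u = p \<and> \<phi> v = q} \<le> n ^ (k - 2)"
proof -
  let ?C = "{\<phi> \<in> {0..<k} \<rightarrow>\<^sub>E {0..<n}. \<phi> u = p \<and> \<phi> v = q}"
  let ?K = "{0..<k} - {u, v}"
  have inj: "inj_on (\<lambda>\<phi>. restrict \<phi> ?K) ?C"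
  proof (rule inj_onI)
    fix \<phi> \<psi> assume a: "\<phi> \<in> ?C" "\<psi> \<in> ?C" and eq: "restrict \<phi> ?K = restrict \<psi> ?K"
    show "\<phi> = \<psi>"
    proof
      fix i
      show "\<phi> i = \<psi> i"
      proof (cases "i \<in> ?K")
        case True thus ?thesis using fun_cong[OF eq, of i] by simp
      next
        case False
        thus ?thesis using a by (auto simp: PiE_def extensional_def)
      qed
    qed
  qed
  have sub: "(\<lambda>\<phi>. restrict \<phi> ?K) ` ?C \<subseteq> ?K \<rightarrow>\<^sub>E {0..<n}"
  proof (rule image_subsetI)
    fix \<phi> assume "\<phi> \<in> ?C"
    hence "\<forall>i\<in>?K. \<phi> i \<in> {0..<n}" by (auto simp: PiE_iff)
    thus "restrict \<phi> ?K \<in> ?K \<rightarrow>\<^sub>E {0..<n}" by (simp add: restrict_PiE_iff)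
  qed
  have "card ?C \<le> card (?K \<rightarrow>\<^sub>E {0..<n})"
    by (rule card_inj_on_le[OF inj sub]) (simp add: finite_PiE)
  also have "\<dots> = n ^ card ?K" by (simp add: card_PiE)
  also have "card ?K = k - 2" using assms by (simp add: card_Diff_subset)
  finally show ?thesis .
qed

lemma count_edge:
  assumes sg: "simple_graph k E" and e: "e \<in> Edges n"
  shows "card {\<phi> \<in> {0..<k} \<rightarrow>\<^sub>E {0..<n}. e \<in> (\<lambda>a. \<phi> ` a) ` E} \<le> 2 * card E * n ^ (k - 2)"
proof -
  obtain p q where pq: "e = {p, q}" using e unfolding Edges_def by auto
  have finE: "finite E"
  proof -
    have "Edges k \<subseteq> Pow {0..<k}" unfolding Edges_def by auto
    thus ?thesis using sg unfolding simple_graph_def by (meson finite_Pow_iff finite_atLeastLessThan finite_subset)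
  qed
  define B where "B a = {\<phi> \<in> {0..<k} \<rightarrow>\<^sub>E {0..<n}. \<phi> ` a = e}" for a
  have cB: "card (B a) \<le> 2 * n ^ (k - 2)" if a: "a \<in> E" for a
  proof -
    obtain u v where uv: "a = {u, v}" "u < k" "v < k" "u \<noteq> v"
      using a sg unfolding simple_graph_def Edges_def by auto
    have "B a \<subseteq> {\<phi> \<in> {0..<k} \<rightarrow>\<^sub>E {0..<n}. \<phi> u = p \<and> \<phi> v = q} \<union> {\<phi> \<in> {0..<k} \<rightarrow>\<^sub>E {0..<n}. \<phi> u = q \<and> \<phi> v = p}"
      unfolding B_def uv pq by (auto simp: doubleton_eq_iff)
    hence "card (B a) \<le> card ({\<phi> \<in> {0..<k} \<rightarrow>\<^sub>E {0..<n}. \<phi> u = p \<and> \<phi> v = q} \<union> {\<phi> \<in> {0..<k} \<rightarrow>\<^sub>E {0..<n}. \<phi> u = q \<and> \<phi> v = p})"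
      by (intro card_mono) (auto simp: finite_PiE)
    also have "\<dots> \<le> card {\<phi> \<in> {0..<k} \<rightarrow>\<^sub>E {0..<n}. \<phi> u = p \<and> \<phi> v = q} + card {\<phi> \<in> {0..<k} \<rightarrow>\<^sub>E {0..<n}. \<phi> u = q \<and> \<phi> v = p}"
      by (rule card_Un_le)
    also have "\<dots> \<le> n ^ (k - 2) + n ^ (k - 2)" using card_fix2[OF uv(2-4)] by (intro add_mono) auto
    finally show ?thesis by simp
  qed
  have "{\<phi> \<in> {0..<k} \<rightarrow>\<^sub>E {0..<n}. e \<in> (\<lambda>a. \<phi> ` a) ` E} = (\<Union>a\<in>E. B a)"
    unfolding B_def by auto
  hence "card {\<phi> \<in> {0..<k} \<rightarrow>\<^sub>E {0..<n}. e \<in> (\<lambda>a. \<phi> ` a) ` E} \<le> (\<Sum>a\<in>E. card (B a))"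
    using card_UN_le[OF finE, of B] by simp
  also have "\<dots> \<le> (\<Sum>a\<in>E. 2 * n ^ (k - 2))" by (intro sum_mono cB)
  also have "\<dots> = 2 * card E * n ^ (k - 2)" by simp
  finally show ?thesis .
qed

lemma card_ind: "finite A \<Longrightarrow> real (card {x\<in>A. P x}) = (\<Sum>x\<in>A. if P x then 1 else 0)"
  by (simp add: sum.If_cases Int_def conj_commute)

lemma ind1: "\<bar>(if A \<subseteq> insert e x then 1 else 0) - (if A \<subseteq> x - {e} then 1 else 0)\<bar> \<le> (if e \<in> A then 1 else (0::real))"
  by auto

lemma ind2: assumes "j \<noteq> e"
  shows "\<bar>((if A \<subseteq> insert j (insert e x) then 1 else 0) - (if A \<subseteq> insert e x - {j} then 1 else 0))
     - ((if A \<subseteq> insert j (x - {e}) then 1 else 0) - (if A \<subseteq> x - {e} - {j} then 1 else 0))\<bar>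
     \<le> (if j \<in> A \<and> e \<in> A then 1 else (0::real))"
proof (cases "j \<in> A \<and> e \<in> A")
  case True
  have "\<not> A \<subseteq> insert e x - {j}" "\<not> A \<subseteq> insert j (x - {e})" "\<not> A \<subseteq> x - {e} - {j}" using True assms by auto
  thus ?thesis using True by simp
next
  case False
  hence "j \<notin> A \<or> e \<notin> A" by simp
  thus ?thesis
  proof
    assume j: "j \<notin> A"
    have "(A \<subseteq> insert j (insert e x)) = (A \<subseteq> insert e x - {j})" using j by auto
    moreover have "(A \<subseteq> insert j (x - {e})) = (A \<subseteq> x - {e} - {j})" using j by auto
    ultimately show ?thesis by simp
  next
    assume e: "e \<notin> A"
    have "(A \<subseteq> insert j (insert e x)) = (A \<subseteq> insert j (x - {e}))" using e by auto
    moreover have "(A \<subseteq> insert e x - {j}) = (A \<subseteq> x - {e} - {j})" using e by auto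
    ultimately show ?thesis by simp
  qed
qed

locale ergm_setup =
  fixes s :: nat and beta :: "nat \<Rightarrow> real" and G :: "nat \<Rightarrow> nat \<times> nat set set" and n :: nat
  assumes sg: "\<forall>i<s. simple_graph (fst (G i)) (snd (G i))" and npos: "n > 0"
begin

definition Phis where "Phis i = {\<phi> \<in> {0..<fst (G i)} \<rightarrow>\<^sub>E {0..<n}. inj_on \<phi> {0..<fst (G i)}}"
definition Aset where "Aset i \<phi> = (\<lambda>a. \<phi> ` a) ` snd (G i)"
definition bb where "bb i = beta i * real n powr (2 - real (fst (G i)))"
abbreviation H where "H \<equiv> ergm_H s beta G n"
definition DH where "DH e x = H (insert e x) - H (x - {e})"

lemma finPhis: "finite (Phis i)"
proof (rule finite_subset)
  show "Phis i \<subseteq> {0..<fst (G i)} \<rightarrow>\<^sub>E {0..<n}" unfolding Phis_def by blast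
  show "finite ({0..<fst (G i)} \<rightarrow>\<^sub>E {0..<n})" by (rule finite_PiE) auto
qed

lemma finE: "i < s \<Longrightarrow> finite (snd (G i))"
proof -
  assume i: "i < s"
  have "Edges (fst (G i)) \<subseteq> Pow {0..<fst (G i)}" unfolding Edges_def by auto
  thus ?thesis using sg i unfolding simple_graph_def by (meson finite_Pow_iff finite_atLeastLessThan finite_subset)
qed

lemma NG_eq: "real (NG n (G i) x) = (\<Sum>\<phi>\<in>Phis i. if Aset i \<phi> \<subseteq> x then 1 else 0)"
proof -
  have "{f \<in> {0..<fst (G i)} \<rightarrow>\<^sub>E {0..<n}. inj_on f {0..<fst (G i)} \<and> (\<forall>e \<in> snd (G i). f ` e \<in> x)}
     = {\<phi> \<in> Phis i. Aset i \<phi> \<subseteq> x}" unfolding Phis_def Aset_def by (simp add: image_subset_iff)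
  thus ?thesis unfolding NG_def using card_ind[OF finPhis] by simp
qed

lemma H_eq: "H x = (\<Sum>i<s. bb i * (\<Sum>\<phi>\<in>Phis i. if Aset i \<phi> \<subseteq> x then 1 else 0))"
  unfolding ergm_H_def bb_def NG_eq ..

lemma DH_eq: "DH e x = (\<Sum>i<s. bb i * (\<Sum>\<phi>\<in>Phis i.
    (if Aset i \<phi> \<subseteq> insert e x then 1 else 0) - (if Aset i \<phi> \<subseteq> x - {e} then 1 else 0)))"
  unfolding DH_def H_eq by (simp add: sum_subtractf right_diff_distrib)

lemma DH_bound: "\<bar>DH e x\<bar> \<le> (\<Sum>i<s. \<bar>bb i\<bar> * (\<Sum>\<phi>\<in>Phis i. if e \<in> Aset i \<phi> then 1 else 0))"
  unfolding DH_eq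
proof (rule order_trans[OF sum_abs], rule sum_mono)
  fix i
  have "\<bar>\<Sum>\<phi>\<in>Phis i. (if Aset i \<phi> \<subseteq> insert e x then 1 else 0) - (if Aset i \<phi> \<subseteq> x - {e} then 1 else (0::real))\<bar>
     \<le> (\<Sum>\<phi>\<in>Phis i. if e \<in> Aset i \<phi> then 1 else 0)"
    by (rule order_trans[OF sum_abs], rule sum_mono, rule ind1)
  thus "\<bar>bb i * (\<Sum>\<phi>\<in>Phis i. (if Aset i \<phi> \<subseteq> insert e x then 1 else 0) - (if Aset i \<phi> \<subseteq> x - {e} then 1 else 0))\<bar>
     \<le> \<bar>bb i\<bar> * (\<Sum>\<phi>\<in>Phis i. if e \<in> Aset i \<phi> then 1 else 0)"
    by (simp add: abs_mult mult_left_mono)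
qed

lemma DH_mixed: assumes "j \<noteq> e"
  shows "\<bar>DH j (insert e x) - DH j (x - {e})\<bar> \<le> (\<Sum>i<s. \<bar>bb i\<bar> * (\<Sum>\<phi>\<in>Phis i. if j \<in> Aset i \<phi> \<and> e \<in> Aset i \<phi> then 1 else 0))"
proof -
  let ?X = "\<lambda>i \<phi>. ((if Aset i \<phi> \<subseteq> insert j (insert e x) then 1 else 0) - (if Aset i \<phi> \<subseteq> insert e x - {j} then 1 else 0))
     - ((if Aset i \<phi> \<subseteq> insert j (x - {e}) then 1 else 0) - (if Aset i \<phi> \<subseteq> x - {e} - {j} then (1::real) else 0))"
  have eq: "DH j (insert e x) - DH j (x - {e}) = (\<Sum>i<s. bb i * (\<Sum>\<phi>\<in>Phis i. ?X i \<phi>))"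
    unfolding DH_eq by (simp only: sum_subtractf[symmetric] right_diff_distrib[symmetric])
  show ?thesis unfolding eq
  proof (rule order_trans[OF sum_abs], rule sum_mono)
    fix i
    have "\<bar>\<Sum>\<phi>\<in>Phis i. ?X i \<phi>\<bar> \<le> (\<Sum>\<phi>\<in>Phis i. if j \<in> Aset i \<phi> \<and> e \<in> Aset i \<phi> then 1 else 0)"
      by (rule order_trans[OF sum_abs], rule sum_mono, rule ind2[OF assms])
    thus "\<bar>bb i * (\<Sum>\<phi>\<in>Phis i. ?X i \<phi>)\<bar> \<le> \<bar>bb i\<bar> * (\<Sum>\<phi>\<in>Phis i. if j \<in> Aset i \<phi> \<and> e \<in> Aset i \<phi> then 1 else 0)"
      unfolding abs_mult by (rule mult_left_mono) simp
  qed
qed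


lemma Phis_sub: "Phis i \<subseteq> {0..<fst (G i)} \<rightarrow>\<^sub>E {0..<n}" unfolding Phis_def by blast

lemma count_i: assumes i: "i < s" and e: "e \<in> Edges n"
  shows "(\<Sum>\<phi>\<in>Phis i. if e \<in> Aset i \<phi> then 1 else 0) \<le> real (2 * card (snd (G i)) * n ^ (fst (G i) - 2))"
proof -
  have "(\<Sum>\<phi>\<in>Phis i. if e \<in> Aset i \<phi> then 1 else (0::real)) = real (card {\<phi>\<in>Phis i. e \<in> Aset i \<phi>})"
    using card_ind[OF finPhis] by simp
  also have "card {\<phi>\<in>Phis i. e \<in> Aset i \<phi>} \<le> card {\<phi> \<in> {0..<fst (G i)} \<rightarrow>\<^sub>E {0..<n}. e \<in> (\<lambda>a. \<phi> ` a) ` snd (G i)}"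
  proof (rule card_mono)
    show "finite {\<phi> \<in> {0..<fst (G i)} \<rightarrow>\<^sub>E {0..<n}. e \<in> (\<lambda>a. \<phi> ` a) ` snd (G i)}"
      by (rule finite_subset[OF _ finite_PiE[of "{0..<fst (G i)}" "\<lambda>_. {0..<n}"]]) auto
    show "{\<phi>\<in>Phis i. e \<in> Aset i \<phi>} \<subseteq> {\<phi> \<in> {0..<fst (G i)} \<rightarrow>\<^sub>E {0..<n}. e \<in> (\<lambda>a. \<phi> ` a) ` snd (G i)}"
      using Phis_sub[of i] unfolding Aset_def by blast
  qed
  also have "\<dots> \<le> 2 * card (snd (G i)) * n ^ (fst (G i) - 2)"
    by (rule count_edge) (use sg i e in auto)
  finally show ?thesis by simp
qed

lemma k_ge2: assumes i: "i < s" and ne: "snd (G i) \<noteq> {}" shows "fst (G i) \<ge> 2"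
proof -
  obtain a where a: "a \<in> snd (G i)" using ne by auto
  then obtain u v where "u < fst (G i)" "v < fst (G i)" "u \<noteq> v"
    using sg i unfolding simple_graph_def Edges_def by blast
  thus ?thesis by linarith
qed

lemma bb_scale: assumes i: "i < s" and ne: "snd (G i) \<noteq> {}"
  shows "\<bar>bb i\<bar> * real n ^ (fst (G i) - 2) = \<bar>beta i\<bar>"
proof -
  have k: "fst (G i) \<ge> 2" by (rule k_ge2[OF i ne])
  have np: "real n > 0" using npos by simp
  have "real n ^ (fst (G i) - 2) = real n powr real (fst (G i) - 2)" using np by (simp add: powr_realpow)
  hence "\<bar>bb i\<bar> * real n ^ (fst (G i) - 2) = \<bar>beta i\<bar> * (real n powr (2 - real (fst (G i))) * real n powr real (fst (G i) - 2))"
    unfolding bb_def by (simp add: abs_mult)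
  also have "real n powr (2 - real (fst (G i))) * real n powr real (fst (G i) - 2) = 1"
    using k np by (simp add: powr_add[symmetric] of_nat_diff)
  finally show ?thesis by simp
qed

lemma weighted1: assumes i: "i < s" and e: "e \<in> Edges n"
  shows "\<bar>bb i\<bar> * (\<Sum>\<phi>\<in>Phis i. if e \<in> Aset i \<phi> then 1 else 0) \<le> 2 * \<bar>beta i\<bar> * real (card (snd (G i)))"
proof (cases "snd (G i) = {}")
  case True thus ?thesis by (simp add: Aset_def)
next
  case False
  have "\<bar>bb i\<bar> * (\<Sum>\<phi>\<in>Phis i. if e \<in> Aset i \<phi> then 1 else 0) \<le> \<bar>bb i\<bar> * real (2 * card (snd (G i)) * n ^ (fst (G i) - 2))"
    by (rule mult_left_mono[OF count_i[OF i e]]) simp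
  also have "\<dots> = 2 * real (card (snd (G i))) * (\<bar>bb i\<bar> * real n ^ (fst (G i) - 2))" by simp
  also have "\<dots> = 2 * \<bar>beta i\<bar> * real (card (snd (G i)))" unfolding bb_scale[OF i False] by simp
  finally show ?thesis .
qed

lemma inner_j: assumes i: "i < s" and e: "e \<in> Edges n"
  shows "(\<Sum>j\<in>Edges n - {e}. if j \<in> Aset i \<phi> \<and> e \<in> Aset i \<phi> then 1 else 0)
    \<le> (if e \<in> Aset i \<phi> then 1 else 0) * real (card (snd (G i)) - 1)"
proof (cases "e \<in> Aset i \<phi>")
  case False thus ?thesis by simp
next
  case True
  have finA: "finite (Aset i \<phi>)" unfolding Aset_def using finE[OF i] by simp
  have fS: "finite (Edges n - {e})"
  proof -
    have "Edges n \<subseteq> Pow {0..<n}" unfolding Edges_def by auto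
    thus ?thesis by (meson finite_Diff finite_Pow_iff finite_atLeastLessThan finite_subset)
  qed
  have "(\<Sum>j\<in>Edges n - {e}. if j \<in> Aset i \<phi> \<and> e \<in> Aset i \<phi> then 1 else (0::real)) = real (card {j \<in> Edges n - {e}. j \<in> Aset i \<phi>})"
    using card_ind[OF fS, of "\<lambda>j. j \<in> Aset i \<phi>"] True by simp
  also have "card {j \<in> Edges n - {e}. j \<in> Aset i \<phi>} \<le> card (Aset i \<phi> - {e})"
    by (rule card_mono) (use finA in auto)
  also have "card (Aset i \<phi> - {e}) = card (Aset i \<phi>) - 1" using True finA by simp
  also have "card (Aset i \<phi>) \<le> card (snd (G i))" unfolding Aset_def by (rule card_image_le[OF finE[OF i]])
  finally show ?thesis using True by simp
qed

definition Phi1 where "Phi1 = (\<Sum>i<s. \<bar>beta i\<bar> * real (card (snd (G i))) * real (card (snd (G i)) - 1))"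
definition D0 where "D0 = (\<Sum>i<s. 2 * \<bar>beta i\<bar> * real (card (snd (G i))))"

lemma DH_D0: assumes e: "e \<in> Edges n" shows "\<bar>DH e x\<bar> \<le> D0"
  unfolding D0_def by (rule order_trans[OF DH_bound], rule sum_mono, rule weighted1) (use e in auto)

lemma dob_DH: assumes e: "e \<in> Edges n"
  shows "(\<Sum>j\<in>Edges n - {e}. \<bar>DH j (insert e x) - DH j (x - {e})\<bar>) \<le> 2 * Phi1"
proof -
  have "(\<Sum>j\<in>Edges n - {e}. \<bar>DH j (insert e x) - DH j (x - {e})\<bar>) \<le>
      (\<Sum>j\<in>Edges n - {e}. \<Sum>i<s. \<bar>bb i\<bar> * (\<Sum>\<phi>\<in>Phis i. if j \<in> Aset i \<phi> \<and> e \<in> Aset i \<phi> then 1 else 0))"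
    by (rule sum_mono, rule DH_mixed) auto
  also have "\<dots> = (\<Sum>i<s. \<bar>bb i\<bar> * (\<Sum>\<phi>\<in>Phis i. \<Sum>j\<in>Edges n - {e}. if j \<in> Aset i \<phi> \<and> e \<in> Aset i \<phi> then 1 else 0))"
    by (simp add: sum.swap[of _ "Edges n - {e}"] sum_distrib_left)
  also have "\<dots> \<le> (\<Sum>i<s. \<bar>bb i\<bar> * (\<Sum>\<phi>\<in>Phis i. (if e \<in> Aset i \<phi> then 1 else 0) * real (card (snd (G i)) - 1)))"
    by (intro sum_mono mult_left_mono inner_j[OF _ e]) auto
  also have "\<dots> = (\<Sum>i<s. (\<bar>bb i\<bar> * (\<Sum>\<phi>\<in>Phis i. if e \<in> Aset i \<phi> then 1 else 0)) * real (card (snd (G i)) - 1))"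
    by (simp add: sum_distrib_right mult.assoc)
  also have "\<dots> \<le> (\<Sum>i<s. (2 * \<bar>beta i\<bar> * real (card (snd (G i)))) * real (card (snd (G i)) - 1))"
    by (intro sum_mono mult_right_mono weighted1[OF _ e]) auto
  also have "\<dots> = 2 * Phi1" unfolding Phi1_def by (simp add: sum_distrib_left mult_ac)
  finally show ?thesis .
qed

end




definition sig :: "real \<Rightarrow> real" where "sig z = 1 / (1 + exp (- z))"

lemma sig_deriv: "DERIV sig z :> exp (- z) / (1 + exp (- z))^2"
proof -
  have p: "1 + exp (- z) \<noteq> 0" using exp_gt_zero[of "- z"] by linarith
  have d: "DERIV (\<lambda>z. 1 + exp (- z)) z :> - exp (- z)"
    by (auto intro!: derivative_eq_intros)
  have "DERIV (\<lambda>z. inverse (1 + exp (- z))) z :> - (- exp (- z) * inverse ((1 + exp (- z)) ^ Suc (Suc 0)))"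
    by (rule DERIV_inverse_fun[OF d p])
  moreover have "sig = (\<lambda>z. inverse (1 + exp (- z)))" unfolding sig_def by (simp add: fun_eq_iff inverse_eq_divide)
  ultimately show ?thesis by (simp add: divide_inverse power2_eq_square)
qed

lemma sig_deriv_le: "exp (- (z::real)) / (1 + exp (- z))^2 \<le> 1 / 4"
proof -
  define u where "u = exp (- z)"
  have u: "u > 0" unfolding u_def by simp
  have "0 \<le> (1 - u)^2" by simp
  hence "4 * u \<le> (1 + u)^2" by (simp add: power2_eq_square algebra_simps)
  hence "u / (1 + u)^2 \<le> 1 / 4" using u by (simp add: divide_simps)
  thus ?thesis unfolding u_def .
qed

lemma sig_lip: "\<bar>sig x - sig y\<bar> \<le> \<bar>x - y\<bar> / 4"
proof -
  have key: "\<bar>sig b - sig a\<bar> \<le> \<bar>b - a\<bar> / 4" if ab: "a < b" for a b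
  proof -
    obtain z where z: "sig b - sig a = (b - a) * (exp (- z) / (1 + exp (- z))^2)"
      using MVT2[OF ab, of sig "\<lambda>z. exp (- z) / (1 + exp (- z))^2"] sig_deriv by blast
    have nn: "0 \<le> exp (- z) / (1 + exp (- z))^2" by simp
    have "\<bar>sig b - sig a\<bar> = (b - a) * (exp (- z) / (1 + exp (- z))^2)" unfolding z using ab nn by simp
    also have "\<dots> \<le> (b - a) * (1 / 4)" using ab sig_deriv_le[of z] by (intro mult_left_mono) auto
    finally show ?thesis using ab by simp
  qed
  show ?thesis
  proof (cases x y rule: linorder_cases)
    case less thus ?thesis using key[OF less] by (simp add: abs_minus_commute)
  next
    case equal thus ?thesis by simp
  next
    case greater thus ?thesis using key[OF greater] by simp
  qed
qed

lemma expfrac_sig: "exp (a::real) / (exp a + exp b) = sig (a - b)"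
proof -
  have "exp a / (exp a + exp b) = 1 / (1 + exp b / exp a)" by (simp add: field_simps)
  also have "exp b / exp a = exp (- (a - b))" by (simp add: exp_diff)
  finally show ?thesis unfolding sig_def .
qed

lemma expfrac_lip: "\<bar>exp (a::real) / (exp a + exp b) - exp c / (exp c + exp d)\<bar> \<le> \<bar>(a - b) - (c - d)\<bar> / 4"
  unfolding expfrac_sig by (rule sig_lip)


context ergm_setup
begin

lemma Phi1_nonneg: "Phi1 \<ge> 0" unfolding Phi1_def by (intro sum_nonneg) auto

lemma dob_ergm: assumes e: "e \<in> Edges n"
  shows "(\<Sum>j\<in>Edges n - {e}. \<bar>pj (\<lambda>x. exp (H x)) j (insert e x) - pj (\<lambda>x. exp (H x)) j (x - {e})\<bar>) \<le> Phi1 / 2"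
proof -
  have "(\<Sum>j\<in>Edges n - {e}. \<bar>pj (\<lambda>x. exp (H x)) j (insert e x) - pj (\<lambda>x. exp (H x)) j (x - {e})\<bar>)
     \<le> (\<Sum>j\<in>Edges n - {e}. \<bar>DH j (insert e x) - DH j (x - {e})\<bar> / 4)"
    unfolding pj_def DH_def by (intro sum_mono expfrac_lip)
  also have "\<dots> = (\<Sum>j\<in>Edges n - {e}. \<bar>DH j (insert e x) - DH j (x - {e})\<bar>) / 4"
    by (simp add: sum_divide_distrib)
  also have "\<dots> \<le> 2 * Phi1 / 4" using dob_DH[OF e, of x] by (simp add: divide_right_mono)
  finally show ?thesis by simp
qed

lemma H_toggle: assumes e: "e \<in> Edges n" shows "H (insert e x) \<ge> H (x - {e}) - D0"
  using DH_D0[OF e, of x] unfolding DH_def by linarith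

end

lemma finite_Edges: "finite (Edges n)"
proof -
  have "Edges n \<subseteq> Pow {0..<n}" unfolding Edges_def by auto
  thus ?thesis by (meson finite_Pow_iff finite_atLeastLessThan finite_subset)
qed

lemma card_Edges: "card (Edges n) \<le> n * n"
proof -
  have "Edges n \<subseteq> (\<lambda>(a, b). {a, b}) ` ({0..<n} \<times> {0..<n})" unfolding Edges_def by auto
  hence "card (Edges n) \<le> card ((\<lambda>(a, b). {a, b}) ` ({0..<n} \<times> {0..<n}))"
    by (intro card_mono) auto
  also have "\<dots> \<le> card ({0..<n} \<times> {0..<n})" by (rule card_image_le) auto
  finally show ?thesis by (simp add: card_cartesian_product)
qed

lemma finite_T3set: "finite (T3set n)"
proof -
  have "T3set n \<subseteq> (\<lambda>(a, b, c). {{a, b}, {b, c}, {a, c}}) ` ({0..<n} \<times> {0..<n} \<times> {0..<n})"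
    unfolding T3set_def by auto
  thus ?thesis by (rule finite_subset) auto
qed

lemma T3set_small: "n < 3 \<Longrightarrow> T3set n = {}"
  unfolding T3set_def by auto

lemma tri_through:
  assumes t: "t \<in> T3set n" and pq: "{p, q} \<in> t"
  shows "t \<in> (\<lambda>r. {{p, q}, {q, r}, {p, r}}) ` {0..<n}"
proof -
  obtain a b c where t': "t = {{a, b}, {b, c}, {a, c}}" and abc: "a < n" "b < n" "c < n"
    using t unfolding T3set_def by blast
  have "{p, q} = {a, b} \<or> {p, q} = {b, c} \<or> {p, q} = {a, c}" using pq t' by blast
  hence "\<exists>r<n. t = {{p, q}, {q, r}, {p, r}}"
  proof (elim disjE)
    assume h: "{p, q} = {a, b}"
    hence "(p = a \<and> q = b) \<or> (p = b \<and> q = a)" by (simp add: doubleton_eq_iff)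
    thus ?thesis
    proof
      assume "p = a \<and> q = b" thus ?thesis using t' abc by (intro exI[of _ c]) (auto simp: insert_commute)
    next
      assume "p = b \<and> q = a" thus ?thesis using t' abc by (intro exI[of _ c]) (auto simp: insert_commute)
    qed
  next
    assume h: "{p, q} = {b, c}"
    hence "(p = b \<and> q = c) \<or> (p = c \<and> q = b)" by (simp add: doubleton_eq_iff)
    thus ?thesis
    proof
      assume "p = b \<and> q = c" thus ?thesis using t' abc by (intro exI[of _ a]) (auto simp: insert_commute)
    next
      assume "p = c \<and> q = b" thus ?thesis using t' abc by (intro exI[of _ a]) (auto simp: insert_commute)
    qed
  next
    assume h: "{p, q} = {a, c}"
    hence "(p = a \<and> q = c) \<or> (p = c \<and> q = a)" by (simp add: doubleton_eq_iff)
    thus ?thesis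
    proof
      assume "p = a \<and> q = c" thus ?thesis using t' abc by (intro exI[of _ b]) (auto simp: insert_commute)
    next
      assume "p = c \<and> q = a" thus ?thesis using t' abc by (intro exI[of _ b]) (auto simp: insert_commute)
    qed
  qed
  then obtain r where r: "r < n" "t = {{p, q}, {q, r}, {p, r}}" by blast
  show ?thesis
    by (rule rev_image_eqI[where f = "\<lambda>r. {{p, q}, {q, r}, {p, r}}" and x = r]) (use r in simp_all)
qed

lemma card_tri_through: assumes e: "e \<in> Edges n" shows "card {t \<in> T3set n. e \<in> t} \<le> n"
proof -
  obtain p q where pq: "e = {p, q}" using e unfolding Edges_def by blast
  have "{t \<in> T3set n. e \<in> t} \<subseteq> (\<lambda>r. {{p, q}, {q, r}, {p, r}}) ` {0..<n}"
    using tri_through pq by blast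
  hence "card {t \<in> T3set n. e \<in> t} \<le> card ((\<lambda>r. {{p, q}, {q, r}, {p, r}}) ` {0..<n})"
    by (intro card_mono) auto
  also have "\<dots> \<le> card {0..<n}" by (rule card_image_le) auto
  finally show ?thesis by simp
qed

lemma Xe_01: "0 \<le> Xe e x" "Xe e x \<le> 1" unfolding Xe_def by auto

lemma T3_BD: "BD (Edges n) (T3 n) (real n)"
  unfolding BD_def
proof (intro ballI allI)
  fix e x assume e: "e \<in> Edges n"
  have trm: "\<bar>(\<Prod>e'\<in>t. Xe e' (insert e x)) - (\<Prod>e'\<in>t. Xe e' (x - {e}))\<bar> \<le> (if e \<in> t then 1 else 0)" for t
  proof (cases "e \<in> t")
    case False
    have "(\<Prod>e'\<in>t. Xe e' (insert e x)) = (\<Prod>e'\<in>t. Xe e' (x - {e}))"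
      by (rule prod.cong) (use False in \<open>auto simp: Xe_def\<close>)
    thus ?thesis by simp
  next
    case True
    have "0 \<le> (\<Prod>e'\<in>t. Xe e' (insert e x))" "(\<Prod>e'\<in>t. Xe e' (insert e x)) \<le> 1"
      "0 \<le> (\<Prod>e'\<in>t. Xe e' (x - {e}))" "(\<Prod>e'\<in>t. Xe e' (x - {e})) \<le> 1"
      by (auto intro!: prod_nonneg prod_le_1 simp: Xe_01)
    thus ?thesis using True by simp
  qed
  have "\<bar>T3 n (insert e x) - T3 n (x - {e})\<bar> = \<bar>\<Sum>t\<in>T3set n. (\<Prod>e'\<in>t. Xe e' (insert e x)) - (\<Prod>e'\<in>t. Xe e' (x - {e}))\<bar>"
    unfolding T3_def by (simp add: sum_subtractf)
  also have "\<dots> \<le> (\<Sum>t\<in>T3set n. if e \<in> t then 1 else 0)"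
    by (rule order_trans[OF sum_abs], rule sum_mono, rule trm)
  also have "\<dots> = real (card {t \<in> T3set n. e \<in> t})" using card_ind[OF finite_T3set] by simp
  also have "\<dots> \<le> real n" using card_tri_through[OF e] by simp
  finally show "\<bar>T3 n (insert e x) - T3 n (x - {e})\<bar> \<le> real n" .
qed




context dob
begin

lemma toggle:
  assumes e: "e \<in> S" and K: "\<And>x. w (x - {e}) \<le> K * w (insert e x)" and K0: "K \<ge> 0"
    and Q: "\<And>x. Q (insert e x) = Q (x - {e})"
  shows "(\<Sum>x\<in>Pow S. if Q x then w x else 0) \<le> (1 + K) * (\<Sum>x\<in>Pow S. if Q x \<and> e \<in> x then w x else 0)"
proof -
  define R where "R = (\<Sum>x\<in>Pow S. if Q x \<and> e \<in> x then w x else 0)"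
  have R1: "R = (\<Sum>x\<in>{x\<in>Pow S. e \<in> x}. if Q x then w x else 0)"
    unfolding R_def split_pow[of _ e] by (simp add: sum.neutral)
  have A0: "(\<Sum>x\<in>{x\<in>Pow S. e \<notin> x}. if Q x then w x else 0) \<le> K * R"
  proof -
    have "(\<Sum>x\<in>{x\<in>Pow S. e \<notin> x}. if Q x then w x else 0) = (\<Sum>y\<in>{y\<in>Pow S. e \<in> y}. if Q (y - {e}) then w (y - {e}) else 0)"
      by (rule reindex0[OF e])
    also have "\<dots> \<le> (\<Sum>y\<in>{y\<in>Pow S. e \<in> y}. K * (if Q y then w y else 0))"
    proof (rule sum_mono)
      fix y assume "y \<in> {y\<in>Pow S. e \<in> y}"
      hence ey: "insert e y = y" by auto
      have "Q (y - {e}) = Q y" using Q[of y] ey by simp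
      moreover have "w (y - {e}) \<le> K * w y" using K[of y] ey by simp
      ultimately show "(if Q (y - {e}) then w (y - {e}) else 0) \<le> K * (if Q y then w y else 0)" by simp
    qed
    also have "\<dots> = K * R" unfolding R1 by (simp add: sum_distrib_left)
    finally show ?thesis .
  qed
  have "(\<Sum>x\<in>Pow S. if Q x then w x else 0) = R + (\<Sum>x\<in>{x\<in>Pow S. e \<notin> x}. if Q x then w x else 0)"
    unfolding R1 by (rule split_pow)
  also have "\<dots> \<le> R + K * R" using A0 by simp
  finally show ?thesis unfolding R_def by (simp add: algebra_simps)
qed

end

lemma Phi_deriv: "deriv (Phi s b G) 1 = (\<Sum>i<s. b i * real (card (snd (G i))) * real (card (snd (G i)) - 1))"
proof -
  have "DERIV (Phi s b G) 1 :> (\<Sum>i<s. b i * real (card (snd (G i))) * (real (card (snd (G i)) - 1) * 1 ^ (card (snd (G i)) - 1 - Suc 0)))"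
    unfolding Phi_def
    by (rule DERIV_sum, rule DERIV_cmult, rule DERIV_pow)
  hence "deriv (Phi s b G) 1 = (\<Sum>i<s. b i * real (card (snd (G i))) * (real (card (snd (G i)) - 1) * 1 ^ (card (snd (G i)) - 1 - Suc 0)))"
    by (rule DERIV_imp_deriv)
  thus ?thesis by simp
qed




lemma ergm_prob_le1: "ergm_P s beta G n P \<le> 1"
proof -
  have fin: "finite (Pow (Edges n))" using finite_Edges by simp
  have Zp: "(\<Sum>x\<in>Pow (Edges n). exp (ergm_H s beta G n x)) > 0"
    using fin by (intro sum_pos) auto
  have "(\<Sum>x\<in>Pow (Edges n). exp (ergm_H s beta G n x) * (if P x then 1 else 0)) \<le> (\<Sum>x\<in>Pow (Edges n). exp (ergm_H s beta G n x))"
    by (intro sum_mono) auto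
  thus ?thesis unfolding ergm_P_def ergm_E_def using Zp by (simp add: divide_simps)
qed

theorem corollary2p6:
  fixes s :: nat and beta :: "nat \<Rightarrow> real" and G :: "nat \<Rightarrow> nat \<times> nat set set"
  assumes "s \<ge> 1"
    and "\<forall>i<s. simple_graph (fst (G i)) (snd (G i))"
    and "G 0 = (2, {{0, 1}})"
    and "deriv (Phi s (\<lambda>i. \<bar>beta i\<bar>) G) 1 / 2 < 1"
  shows "\<exists>C>0. \<forall>(n::nat) (t::real). t \<ge> 0 \<longrightarrow>
    ergm_P s beta G n (\<lambda>x. \<bar>T3 n x - ergm_E s beta G n (T3 n)\<bar> \<ge> t)
    \<le> 2 * exp (- (1 / C) * min (min
         (t\<^sup>2 / max (max (C_S2 s beta G n * real n ^ 4) (C_E s beta G n * real n ^ 3)) (real n ^ 3))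
         (t / max (sqrt (2 * real n)) (2 * C_E s beta G n * real n)))
         (t powr (2/3) / 2))"
proof -
  define P1 where "P1 = (\<Sum>i<s. \<bar>beta i\<bar> * real (card (snd (G i))) * real (card (snd (G i)) - 1))"
  define D0' where "D0' = (\<Sum>i<s. 2 * \<bar>beta i\<bar> * real (card (snd (G i))))"
  define \<alpha> where "\<alpha> = P1 / 2"
  define K where "K = exp D0'"
  define \<delta> where "\<delta> = 1 / (1 + K)^2"
  define C where "C = 2 / (\<delta> * (1 - \<alpha>))"
  have a1: "\<alpha> < 1" using assms(4) unfolding \<alpha>_def P1_def Phi_deriv .
  have a0: "\<alpha> \<ge> 0" unfolding \<alpha>_def P1_def by (intro divide_nonneg_pos sum_nonneg) auto
  have Kp: "K > 0" unfolding K_def by simp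
  have dp: "\<delta> > 0" unfolding \<delta>_def using Kp by simp
  have Cp: "C > 0" unfolding C_def using dp a1 by simp
  show ?thesis
  proof (intro exI[of _ C] conjI allI impI Cp)
    fix n :: nat and t :: real assume t: "t \<ge> 0"
    define m where "m = min (min
         (t\<^sup>2 / max (max (C_S2 s beta G n * real n ^ 4) (C_E s beta G n * real n ^ 3)) (real n ^ 3))
         (t / max (sqrt (2 * real n)) (2 * C_E s beta G n * real n)))
         (t powr (2/3) / 2)"
    show "ergm_P s beta G n (\<lambda>x. \<bar>T3 n x - ergm_E s beta G n (T3 n)\<bar> \<ge> t) \<le> 2 * exp (- (1 / C) * m)"
    proof (cases "n < 3")
      case True
      show ?thesis
      proof (cases "t = 0")
        case True
        have "m = 0" unfolding m_def True by simp
        moreover have "ergm_P s beta G n (\<lambda>x. \<bar>T3 n x - ergm_E s beta G n (T3 n)\<bar> \<ge> t) \<le> 1"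
          by (rule ergm_prob_le1)
        ultimately show ?thesis by simp
      next
        case False
        have "ergm_P s beta G n (\<lambda>x. \<bar>T3 n x - ergm_E s beta G n (T3 n)\<bar> \<ge> t) = 0"
          unfolding ergm_P_def ergm_E_def T3_def T3set_small[OF \<open>n < 3\<close>] using False t by simp
        thus ?thesis by simp
      qed
    next
      case False
      hence n3: "n \<ge> 3" by simp
      interpret E: ergm_setup s beta G n using assms(2) n3 by unfold_locales auto
      have e01: "{0, 1} \<in> Edges n" "{0, 2} \<in> Edges n"
      proof -
        have "\<exists>a b. {0::nat, 1} = {a, b} \<and> a < n \<and> b < n \<and> a \<noteq> b" using n3 by (intro exI[of _ 0] exI[of _ 1]) simp
        thus "{0, 1} \<in> Edges n" unfolding Edges_def by simp
        have "\<exists>a b. {0::nat, 2} = {a, b} \<and> a < n \<and> b < n \<and> a \<noteq> b" using n3 by (intro exI[of _ 0] exI[of _ 2]) simp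
        thus "{0, 2} \<in> Edges n" unfolding Edges_def by simp
      qed
      have ne: "Edges n \<noteq> {}" using e01 by auto
      have P1eq: "E.Phi1 = P1" unfolding E.Phi1_def P1_def ..
      have D0eq: "E.D0 = D0'" unfolding E.D0_def D0'_def ..
      interpret dob "Edges n" "\<lambda>x. exp (E.H x)" \<alpha>
        by unfold_locales (use finite_Edges ne a0 a1 E.dob_ergm in \<open>auto simp: \<alpha>_def P1eq\<close>)
      define w where "w x = exp (E.H x)" for x
      define Z where "Z = (\<Sum>x\<in>Pow (Edges n). w x)"
      have Zp: "Z > 0" unfolding Z_def w_def using finite_Edges by (intro sum_pos) auto
      have conc': "(\<Sum>x\<in>Pow (Edges n). if \<bar>T3 n x - (\<Sum>x\<in>Pow (Edges n). w x * T3 n x) / Z\<bar> \<ge> t then w x else 0) / Z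
          \<le> 2 * exp (- t\<^sup>2 * (1 - \<alpha>) / (2 * (real n)\<^sup>2 * real (card (Edges n))))"
        unfolding w_def Z_def by (rule conc[OF T3_BD _ t]) (use n3 in simp)
      have LHS: "ergm_P s beta G n (\<lambda>x. \<bar>T3 n x - ergm_E s beta G n (T3 n)\<bar> \<ge> t) =
        (\<Sum>x\<in>Pow (Edges n). if \<bar>T3 n x - (\<Sum>x\<in>Pow (Edges n). w x * T3 n x) / Z\<bar> \<ge> t then w x else 0) / Z"
        unfolding ergm_P_def ergm_E_def w_def Z_def by (intro arg_cong2[where f="(/)"] sum.cong) auto
      have Kb: "w (x - {e}) \<le> K * w (insert e x)" if e: "e \<in> Edges n" for e x
      proof -
        have "E.H (x - {e}) \<le> D0' + E.H (insert e x)" using E.H_toggle[OF e, of x] D0eq by simp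
        hence "exp (E.H (x - {e})) \<le> exp (D0' + E.H (insert e x))" by simp
        thus ?thesis unfolding w_def K_def by (simp add: exp_add)
      qed
      have t1: "(\<Sum>x\<in>Pow (Edges n). if True then w x else 0) \<le> (1 + K) * (\<Sum>x\<in>Pow (Edges n). if True \<and> {0,1} \<in> x then w x else 0)"
        unfolding w_def by (rule toggle[OF e01(1)]) (use Kb[OF e01(1)] Kp in \<open>auto simp: w_def\<close>)
      have t2: "(\<Sum>x\<in>Pow (Edges n). if {0,1} \<in> x then w x else 0) \<le> (1 + K) * (\<Sum>x\<in>Pow (Edges n). if {0,1} \<in> x \<and> {0,2} \<in> x then w x else 0)"
        unfolding w_def by (rule toggle[OF e01(2)]) (use Kb[OF e01(2)] Kp in \<open>auto simp: w_def doubleton_eq_iff\<close>)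
      have CS: "C_S2 s beta G n = (\<Sum>x\<in>Pow (Edges n). if {0,1} \<in> x \<and> {0,2} \<in> x then w x else 0) / Z"
        unfolding C_S2_def ergm_E_def w_def Z_def by (intro arg_cong2[where f="(/)"] sum.cong) (auto simp: Xe_def)
      have "Z \<le> (1 + K) * ((1 + K) * (\<Sum>x\<in>Pow (Edges n). if {0,1} \<in> x \<and> {0,2} \<in> x then w x else 0))"
      proof -
        have "Z \<le> (1 + K) * (\<Sum>x\<in>Pow (Edges n). if {0,1} \<in> x then w x else 0)" using t1 unfolding Z_def by simp
        also have "\<dots> \<le> (1 + K) * ((1 + K) * (\<Sum>x\<in>Pow (Edges n). if {0,1} \<in> x \<and> {0,2} \<in> x then w x else 0))"
          using t2 Kp by (intro mult_left_mono) auto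
        finally show ?thesis .
      qed
      hence CSb: "C_S2 s beta G n \<ge> \<delta>" unfolding CS \<delta>_def using Zp Kp
        by (simp add: divide_simps power2_eq_square mult_ac)
      define N where "N = real (card (Edges n))"
      have Nb: "N \<le> real n * real n" unfolding N_def using card_Edges[of n] by (metis of_nat_le_iff of_nat_mult)
      have np: "real n > 0" using n3 by simp
      have Mx: "max (max (C_S2 s beta G n * real n ^ 4) (C_E s beta G n * real n ^ 3)) (real n ^ 3) \<ge> \<delta> * real n ^ 4"
      proof -
        have "\<delta> * real n ^ 4 \<le> C_S2 s beta G n * real n ^ 4" using CSb by (rule mult_right_mono) simp
        thus ?thesis by (simp add: le_max_iff_disj)
      qed
      have dn: "\<delta> * real n ^ 4 > 0" using dp np by simp
      have m1: "m \<le> t\<^sup>2 / (\<delta> * real n ^ 4)"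
      proof -
        have "m \<le> t\<^sup>2 / max (max (C_S2 s beta G n * real n ^ 4) (C_E s beta G n * real n ^ 3)) (real n ^ 3)"
          unfolding m_def by linarith
        also have "\<dots> \<le> t\<^sup>2 / (\<delta> * real n ^ 4)" using Mx dn by (intro divide_left_mono) auto
        finally show ?thesis .
      qed
      have "(1 / C) * m \<le> (1 / C) * (t\<^sup>2 / (\<delta> * real n ^ 4))" using m1 Cp by (intro mult_left_mono) auto
      also have "\<dots> = t\<^sup>2 * (1 - \<alpha>) / (2 * real n ^ 4)" unfolding C_def using dp a1 np by (simp add: field_simps)
      also have "\<dots> \<le> t\<^sup>2 * (1 - \<alpha>) / (2 * (real n)\<^sup>2 * N)"
      proof (rule divide_left_mono)
        show "2 * (real n)\<^sup>2 * N \<le> 2 * real n ^ 4" using Nb np by (simp add: power2_eq_square power4_eq_xxxx mult_left_mono)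
        show "0 \<le> t\<^sup>2 * (1 - \<alpha>)" using a1 by simp
        have "N > 0" unfolding N_def using ne finite_Edges by (simp add: card_gt_0_iff)
        thus "0 < 2 * real n ^ 4 * (2 * (real n)\<^sup>2 * N)" using np by simp
      qed
      finally have "- t\<^sup>2 * (1 - \<alpha>) / (2 * (real n)\<^sup>2 * real (card (Edges n))) \<le> - (1 / C) * m"
        unfolding N_def by simp
      hence "2 * exp (- t\<^sup>2 * (1 - \<alpha>) / (2 * (real n)\<^sup>2 * real (card (Edges n)))) \<le> 2 * exp (- (1 / C) * m)" by simp
      thus ?thesis unfolding LHS m_def[symmetric] by (rule order_trans[OF conc'])
    qed
  qed
qed


end
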